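(* Let $d\ge1$ be an integer and $0<\lambda<1$. Let $\mathbf{v}(\cdot)=\{v_k(\cdot)\}_{k\ge0}$ be a solution, with $v_0(t)\equiv1$, of the differential system \[\frac{d}{dt}v_k(t)=\lambda(v_{k-1}(t)-v_k(t))-(1-v_{k+1}(t))^d+(1-v_{k}(t))^d,\qquad k=1,2,\dots\] with initial state $\mathbf{v}(0)\in U_o$. Then $\lim_{t\to\infty}v_k(t)=v^*_k$ for every $k=1,2,\dots$.
   Context: $U$ is the set of sequences $\mathbf{u}=\{u_k\}_{k\ge0}$ with $1=u_0\ge u_1\ge u_2\ge\cdots\ge 0$, and $U_o=\{\mathbf{u}\in U:\sum_{k\ge1}u_k<\infty\}$. The sequence $\mathbf{v}^*=\{v^*_k\}_{k\ge0}$ is defined by $v^*_0=1$ and $v^*_k=1-\sqrt[d]{1-\lambda v^*_{k-1}}$ for $k=1,2,\dots$. *)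

theory Defs
  imports "HOL-Analysis.Analysis"
begin

definition seqU :: "(nat \<Rightarrow> real) set" where
  "seqU = {u. u 0 = 1 \<and> (\<forall>k. u (Suc k) \<le> u k) \<and> (\<forall>k. 0 \<le> u k)}"

definition seqUo :: "(nat \<Rightarrow> real) set" where
  "seqUo = {u \<in> seqU. summable (\<lambda>k. u (Suc k))}"

fun vstar :: "nat \<Rightarrow> real \<Rightarrow> nat \<Rightarrow> real" where
  "vstar d lam 0 = 1"
| "vstar d lam (Suc k) = 1 - root d (1 - lam * vstar d lam k)"

end

theory Submission
  imports Defs
begin


lemma deriv_mono_le:
  fixes F G :: "real \<Rightarrow> real"
  assumes "a \<le> b"
    and dF: "\<And>x. a \<le> x \<Longrightarrow> x \<le> b \<Longrightarrow> (F has_real_derivative F' x) (at x within {a..b})"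
    and dG: "\<And>x. a \<le> x \<Longrightarrow> x \<le> b \<Longrightarrow> (G has_real_derivative G' x) (at x within {a..b})"
    and le: "\<And>x. a \<le> x \<Longrightarrow> x \<le> b \<Longrightarrow> F' x \<le> G' x"
  shows "F b - F a \<le> G b - G a"
proof -
  have "\<exists>x\<in>{a..b}. (\<lambda>x. F x - G x) b - (\<lambda>x. F x - G x) a = (\<lambda>h. (F' x - G' x) * h) (b - a)"
  proof (rule mvt_very_simple[OF assms(1)])
    fix x assume "a \<le> x" "x \<le> b"
    then have "((\<lambda>x. F x - G x) has_real_derivative (F' x - G' x)) (at x within {a..b})"
      using dF dG by (intro DERIV_diff) auto
    then show "((\<lambda>x. F x - G x) has_derivative (\<lambda>h. (F' x - G' x) * h)) (at x within {a..b})"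
      by (simp add: has_field_derivative_def)
  qed
  then obtain x where x: "x \<in> {a..b}" "F b - G b - (F a - G a) = (F' x - G' x) * (b - a)" by auto
  have "(F' x - G' x) * (b - a) \<le> 0"
    using le[of x] x(1) assms(1) by (intro mult_nonpos_nonneg) auto
  then show ?thesis using x(2) by linarith
qed

lemma pow_diff_upper:
  fixes A B :: real
  assumes "0 \<le> A" "A \<le> 1" "0 \<le> B" "B \<le> 1"
  shows "\<bar>A ^ n - B ^ n\<bar> \<le> real n * \<bar>A - B\<bar>"
proof (induction n)
  case 0 then show ?case by simp
next
  case (Suc n)
  have eq: "A ^ Suc n - B ^ Suc n = A * (A ^ n - B ^ n) + B ^ n * (A - B)"
    by (simp add: algebra_simps)
  have "\<bar>A * (A ^ n - B ^ n)\<bar> \<le> \<bar>A ^ n - B ^ n\<bar>"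
    using assms by (simp add: abs_mult mult_left_le_one_le)
  moreover have "\<bar>B ^ n * (A - B)\<bar> \<le> \<bar>A - B\<bar>"
    using assms by (simp add: abs_mult mult_left_le_one_le power_le_one)
  ultimately show ?case using Suc eq by (simp add: algebra_simps)
qed

lemma pow_diff_lower:
  fixes A B :: real
  assumes "0 \<le> A" "0 \<le> B"
  shows "B ^ m * \<bar>A - B\<bar> \<le> \<bar>A ^ Suc m - B ^ Suc m\<bar>"
proof (cases "B \<le> A")
  case True
  have "B ^ m \<le> A ^ m" using True assms by (intro power_mono) auto
  then have "A * B ^ m \<le> A * A ^ m" using assms by (intro mult_left_mono) auto
  then show ?thesis using True by (simp add: algebra_simps)
next
  case False
  have "A ^ m \<le> B ^ m" using False assms by (intro power_mono) auto
  then have "A * A ^ m \<le> A * B ^ m" using assms by (intro mult_left_mono) auto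
  then show ?thesis using False by (simp add: algebra_simps)
qed

lemma key_ineq:
  fixes e e' h h2 lam dd eps :: real
  assumes "0 < eps" "0 \<le> lam" "e * h \<ge> 0" "\<bar>h\<bar> \<le> dd * \<bar>e\<bar>" "0 \<le> dd"
  shows "e * (lam * (e' - e) + h2 - h) / sqrt (e\<^sup>2 + eps\<^sup>2)
     \<le> lam * \<bar>e'\<bar> - lam * \<bar>e\<bar> - \<bar>h\<bar> + \<bar>h2\<bar> + (lam + dd) * eps"
proof -
  define S where "S = sqrt (e\<^sup>2 + eps\<^sup>2)"
  have Spos: "S > 0" unfolding S_def using assms(1) by (simp add: add_nonneg_pos)
  have Sge: "\<bar>e\<bar> \<le> S" unfolding S_def by (simp add: real_le_rsqrt)
  have Sle: "S \<le> \<bar>e\<bar> + eps"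
  proof -
    have "e\<^sup>2 + eps\<^sup>2 \<le> (\<bar>e\<bar> + eps)\<^sup>2" using assms(1)
      by (simp add: power2_eq_square algebra_simps)
    then have "S \<le> sqrt ((\<bar>e\<bar> + eps)\<^sup>2)" unfolding S_def by (rule real_sqrt_le_mono)
    also have "\<dots> = \<bar>e\<bar> + eps" using assms(1) by simp
    finally show ?thesis .
  qed
  define s where "s = e / S"
  have sabs: "\<bar>s\<bar> \<le> 1" unfolding s_def using Spos Sge by (simp add: abs_div)
  have dd0: "0 \<le> dd" by (rule assms(5))
  have se: "s * e = \<bar>s\<bar> * \<bar>e\<bar>" unfolding s_def using Spos
    by (simp add: abs_div abs_mult_self_eq power2_eq_square)
  have sh: "s * h = \<bar>s\<bar> * \<bar>h\<bar>"
  proof -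
    have "s * h = (e * h) / S" unfolding s_def by simp
    also have "\<dots> = \<bar>e * h\<bar> / S" using assms(3) by simp
    also have "\<dots> = \<bar>s\<bar> * \<bar>h\<bar>" unfolding s_def using Spos by (simp add: abs_mult abs_div)
    finally show ?thesis .
  qed
  have t1: "s * (lam * e') \<le> lam * \<bar>e'\<bar>"
  proof -
    have "s * (lam * e') \<le> \<bar>s * (lam * e')\<bar>" by simp
    also have "\<dots> = \<bar>s\<bar> * (lam * \<bar>e'\<bar>)" using assms(2) by (simp add: abs_mult)
    also have "\<dots> \<le> lam * \<bar>e'\<bar>" using sabs assms(2) by (simp add: mult_left_le_one_le)
    finally show ?thesis .
  qed
  have t2: "s * h2 \<le> \<bar>h2\<bar>"
  proof -
    have "s * h2 \<le> \<bar>s\<bar> * \<bar>h2\<bar>" by (metis abs_ge_self abs_mult)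
    also have "\<dots> \<le> \<bar>h2\<bar>" using sabs by (simp add: mult_left_le_one_le)
    finally show ?thesis .
  qed
  have oe: "(1 - \<bar>s\<bar>) * \<bar>e\<bar> \<le> eps"
  proof -
    have "\<bar>s\<bar> * S = \<bar>e\<bar>" unfolding s_def using Spos by (simp add: abs_div)
    have "(1 - \<bar>s\<bar>) * \<bar>e\<bar> \<le> (1 - \<bar>s\<bar>) * S" using sabs Sge by (intro mult_left_mono) auto
    also have "\<dots> = S - \<bar>e\<bar>" using \<open>\<bar>s\<bar> * S = \<bar>e\<bar>\<close> by (simp add: algebra_simps)
    finally show ?thesis using Sle by linarith
  qed
  have t3: "(1 - \<bar>s\<bar>) * (lam * \<bar>e\<bar> + \<bar>h\<bar>) \<le> (lam + dd) * eps"
  proof -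
    have "(1 - \<bar>s\<bar>) * (lam * \<bar>e\<bar> + \<bar>h\<bar>) \<le> (1 - \<bar>s\<bar>) * ((lam + dd) * \<bar>e\<bar>)"
      using sabs assms(4) by (intro mult_left_mono) (auto simp: algebra_simps)
    also have "\<dots> = (lam + dd) * ((1 - \<bar>s\<bar>) * \<bar>e\<bar>)" by simp
    also have "\<dots> \<le> (lam + dd) * eps" using oe assms(2) dd0 by (intro mult_left_mono) auto
    finally show ?thesis .
  qed
  have "e * (lam * (e' - e) + h2 - h) / S = s * (lam * e') + s * h2 - (lam * (s * e) + s * h)"
    unfolding s_def using Spos by (simp add: field_simps)
  also have "\<dots> = s * (lam * e') + s * h2 - \<bar>s\<bar> * (lam * \<bar>e\<bar> + \<bar>h\<bar>)"
    using se sh by (simp add: algebra_simps)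
  also have "\<dots> \<le> lam * \<bar>e'\<bar> - lam * \<bar>e\<bar> - \<bar>h\<bar> + \<bar>h2\<bar> + (lam + dd) * eps"
    using t1 t2 t3 by (simp add: algebra_simps)
  finally show ?thesis unfolding S_def .
qed




lemma int_to_zero:
  fixes f :: "real \<Rightarrow> real" and L B :: real
  assumes L: "0 < L" and nonneg: "\<And>s. 0 \<le> s \<Longrightarrow> 0 \<le> f s"
    and lip: "\<And>x y. 0 \<le> x \<Longrightarrow> 0 \<le> y \<Longrightarrow> \<bar>f x - f y\<bar> \<le> L * \<bar>x - y\<bar>"
    and cont: "continuous_on {0..} f"
    and bnd: "\<And>t. 0 \<le> t \<Longrightarrow> integral {0..t} f \<le> B"
  shows "(f \<longlongrightarrow> 0) at_top"
proof -
  have intg: "f integrable_on {x..y}" if "0 \<le> x" for x y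
    using that by (intro integrable_continuous_interval continuous_on_subset[OF cont]) auto
  show ?thesis unfolding tendsto_iff
  proof (intro allI impI)
    fix \<epsilon> :: real assume ep: "0 < \<epsilon>"
    show "\<forall>\<^sub>F t in at_top. dist (f t) 0 < \<epsilon>"
    proof (rule ccontr)
      assume "\<not> (\<forall>\<^sub>F t in at_top. dist (f t) 0 < \<epsilon>)"
      then have H0: "\<forall>N. \<exists>n\<ge>N. \<not> dist (f n) 0 < \<epsilon>"
        unfolding eventually_at_top_linorder by auto
      have H: "\<exists>t\<ge>T. \<epsilon> \<le> f t" if "0 \<le> T" for T
      proof -
        obtain t where "t \<ge> T" "\<not> dist (f t) 0 < \<epsilon>" using H0 by blast
        then show ?thesis using nonneg[of t] that by auto
      qed
      define w where "w = \<epsilon> / (2 * L)"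
      define \<delta> where "\<delta> = w * (\<epsilon> / 2)"
      have w0: "0 < w" unfolding w_def using ep L by simp
      have d0: "0 < \<delta>" unfolding \<delta>_def using w0 ep by simp
      have Lw: "L * w = \<epsilon> / 2" unfolding w_def using L by simp
      have chunk: "\<delta> \<le> integral {t..t+w} f" if "0 \<le> t" "\<epsilon> \<le> f t" for t
      proof -
        have "integral {t..t+w} (\<lambda>s. \<epsilon> / 2) \<le> integral {t..t+w} f"
        proof (rule integral_le)
          show "f integrable_on {t..t + w}" using intg that by auto
          fix s assume s: "s \<in> {t..t+w}"
          have "\<bar>f s - f t\<bar> \<le> L * \<bar>s - t\<bar>" using lip[of s t] s that by auto
          moreover have "L * \<bar>s - t\<bar> \<le> L * w" using s L by (intro mult_left_mono) auto
          ultimately show "\<epsilon> / 2 \<le> f s" using Lw that by linarith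
        qed auto
        then show ?thesis using w0 unfolding \<delta>_def by (simp add: mult.commute)
      qed
      have grow: "\<exists>T\<ge>0. real n * \<delta> \<le> integral {0..T} f" for n
      proof (induction n)
        case 0 then show ?case by (intro exI[of _ 0]) auto
      next
        case (Suc n)
        then obtain T where T: "T \<ge> 0" "real n * \<delta> \<le> integral {0..T} f" by blast
        obtain t where t: "t \<ge> T" "\<epsilon> \<le> f t" using H[OF T(1)] by blast
        have "integral {0..T} f + integral {T..t} f = integral {0..t} f"
          using T t by (intro Henstock_Kurzweil_Integration.integral_combine intg) auto
        moreover have "0 \<le> integral {T..t} f"
          using T t by (intro integral_nonneg intg nonneg) auto
        moreover have "integral {0..t} f + integral {t..t+w} f = integral {0..t+w} f"
          using T t w0 by (intro Henstock_Kurzweil_Integration.integral_combine intg) auto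
        moreover have "\<delta> \<le> integral {t..t+w} f" using chunk t T by auto
        ultimately have "real (Suc n) * \<delta> \<le> integral {0..t+w} f" using T by (simp add: algebra_simps)
        then show ?case using T t w0 by (intro exI[of _ "t + w"]) auto
      qed
      obtain n where n: "B < real n * \<delta>" using ex_less_of_nat_mult[OF d0] by blast
      obtain T where "T \<ge> 0" "real n * \<delta> \<le> integral {0..T} f" using grow by blast
      then show False using bnd[of T] n by linarith
    qed
  qed
qed




locale sys =
  fixes d :: nat and lam :: real and v :: "real \<Rightarrow> nat \<Rightarrow> real"
  assumes d1: "d \<ge> 1" and lam0: "0 < lam" and lam1: "lam < 1"
    and v0: "\<And>t. t \<ge> 0 \<Longrightarrow> v t 0 = 1"
    and vU: "\<And>t. t \<ge> 0 \<Longrightarrow> v t \<in> seqU"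
    and der: "\<And>t k. t \<ge> 0 \<Longrightarrow> k \<ge> 1 \<Longrightarrow>
           ((\<lambda>s. v s k) has_real_derivative
              (lam * (v t (k - 1) - v t k) - (1 - v t (k + 1)) ^ d + (1 - v t k) ^ d))
           (at t within {0..})"
    and init: "v 0 \<in> seqUo"
begin

definition vs :: "nat \<Rightarrow> real" where "vs j = vstar d lam j"
definition g :: "real \<Rightarrow> real" where "g x = (1 - x) ^ d"
definition a :: "real \<Rightarrow> nat \<Rightarrow> real" where "a t j = \<bar>v t j - vs j\<bar>"
definition h :: "real \<Rightarrow> nat \<Rightarrow> real" where "h t j = g (vs j) - g (v t j)"
definition b :: "real \<Rightarrow> nat \<Rightarrow> real" where "b t j = \<bar>h t j\<bar>"
definition rhs :: "real \<Rightarrow> nat \<Rightarrow> real" where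
  "rhs t k = lam * (v t (k - 1) - v t k) - (1 - v t (k + 1)) ^ d + (1 - v t k) ^ d"

lemma d0: "0 < d" using d1 by simp

lemma v_dec: "t \<ge> 0 \<Longrightarrow> v t (Suc k) \<le> v t k"
  using vU unfolding seqU_def by auto

lemma v_nonneg: "t \<ge> 0 \<Longrightarrow> 0 \<le> v t k"
  using vU unfolding seqU_def by auto

lemma v_mono: "t \<ge> 0 \<Longrightarrow> i \<le> j \<Longrightarrow> v t j \<le> v t i"
  by (rule lift_Suc_antimono_le[of "v t"]) (auto intro: v_dec)

lemma v_le1: "t \<ge> 0 \<Longrightarrow> v t k \<le> 1"
  using v_mono[of t 0 k] v0[of t] by simp

lemma root_ge: "0 \<le> y \<Longrightarrow> y \<le> 1 \<Longrightarrow> y \<le> root d y \<and> root d y \<le> 1 \<and> 0 \<le> root d y"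
proof -
  assume y: "0 \<le> y" "y \<le> 1"
  have r1: "root d y \<le> 1" using real_root_le_mono[OF d0 y(2)] d0 by simp
  have r0: "0 \<le> root d y" using real_root_ge_zero[OF y(1)] .
  have "root d y ^ d \<le> root d y ^ 1"
    using d1 r0 r1 by (intro power_decreasing) auto
  then have "y \<le> root d y" using real_root_pow_pos2[OF d0 y(1)] by simp
  then show ?thesis using r0 r1 by simp
qed

lemma vs_props: "0 \<le> vs j \<and> vs j \<le> 1 \<and> vs j \<le> lam ^ j"
proof (induction j)
  case 0 then show ?case by (simp add: vs_def)
next
  case (Suc j)
  have y: "0 \<le> 1 - lam * vs j" "1 - lam * vs j \<le> 1"
    using Suc lam0 lam1 by (auto simp: mult_le_one)
  note r = root_ge[OF y]
  have vsS: "vs (Suc j) = 1 - root d (1 - lam * vs j)" by (simp add: vs_def)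
  have "vs (Suc j) \<le> lam * vs j" using vsS r by simp
  also have "\<dots> \<le> lam * lam ^ j" using Suc lam0 by (intro mult_left_mono) auto
  finally show ?case using vsS r by simp
qed

lemma vs_nonneg: "0 \<le> vs j" and vs_le1: "vs j \<le> 1" and vs_pow: "vs j \<le> lam ^ j"
  using vs_props by auto

lemma vs0: "vs 0 = 1" by (simp add: vs_def)

lemma vs_lt1: "vs (Suc j) < 1"
proof -
  have "vs (Suc j) \<le> lam ^ Suc j" by (rule vs_pow)
  also have "\<dots> \<le> lam" using lam0 lam1 by (simp add: mult_left_le_one_le power_le_one)
  finally show ?thesis using lam1 by simp
qed

lemma g_vs: "g (vs (Suc j)) = 1 - lam * vs j"
proof -
  have y: "0 \<le> 1 - lam * vs j"
    using vs_props lam0 lam1 by (auto simp: mult_le_one)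
  have "1 - vs (Suc j) = root d (1 - lam * vs j)" by (simp add: vs_def)
  then show ?thesis unfolding g_def using real_root_pow_pos2[OF d0 y] by simp
qed

lemma g_bounds: "0 \<le> x \<Longrightarrow> x \<le> 1 \<Longrightarrow> 0 \<le> g x \<and> g x \<le> 1"
  unfolding g_def by (auto simp: power_le_one)

lemma rhs_eq: "t \<ge> 0 \<Longrightarrow> rhs t (Suc i) =
    lam * ((v t i - vs i) - (v t (Suc i) - vs (Suc i))) + h t (Suc (Suc i)) - h t (Suc i)"
  unfolding rhs_def h_def using g_vs[of i] g_vs[of "Suc i"] by (simp add: g_def algebra_simps)

lemma rhs_bound: "t \<ge> 0 \<Longrightarrow> \<bar>rhs t k\<bar> \<le> lam + 1"
proof -
  assume t: "t \<ge> 0"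
  have A: "\<bar>lam * (v t (k - 1) - v t k)\<bar> \<le> lam"
  proof -
    have "\<bar>v t (k - 1) - v t k\<bar> \<le> 1" using v_nonneg[OF t] v_le1[OF t]
      by (smt (verit))
    then show ?thesis using lam0 by (simp add: abs_mult mult_left_le_one_le)
  qed
  have B: "\<bar>(1 - v t k) ^ d - (1 - v t (k + 1)) ^ d\<bar> \<le> 1"
    using g_bounds[of "v t k"] g_bounds[of "v t (k+1)"] v_nonneg[OF t] v_le1[OF t]
    unfolding g_def by (smt (verit))
  show ?thesis unfolding rhs_def using A B by linarith
qed

lemma derv: "t \<ge> 0 \<Longrightarrow> k \<ge> 1 \<Longrightarrow> ((\<lambda>s. v s k) has_real_derivative rhs t k) (at t within {0..})"
  unfolding rhs_def by (rule der)

lemma v_cont: "continuous_on {0..} (\<lambda>s. v s k)"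
proof (cases "k \<ge> 1")
  case True
  then show ?thesis by (intro DERIV_continuous_on[of _ _ "\<lambda>t. rhs t k"]) (auto intro: derv)
next
  case False
  then have k0: "k = 0" by simp
  show ?thesis by (rule continuous_on_eq[of _ "\<lambda>s. 1"]) (auto simp: v0 k0)
qed

lemma v_lip: "0 \<le> x \<Longrightarrow> 0 \<le> y \<Longrightarrow> \<bar>v x k - v y k\<bar> \<le> (lam + 1) * \<bar>x - y\<bar>"
proof -
  have main: "v t k - v s k \<le> (lam + 1) * (t - s) \<and> v s k - v t k \<le> (lam + 1) * (t - s)"
    if st: "0 \<le> s" "s \<le> t" for s t
  proof (cases "k \<ge> 1")
    case False
    then have "k = 0" by simp
    then show ?thesis using st v0[of s] v0[of t] lam0 by simp
  next
    case True
    have D: "((\<lambda>r. v r k) has_real_derivative rhs x k) (at x within {s..t})" if "s \<le> x" "x \<le> t" for x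
      using derv[of x k] True that st by (auto intro: DERIV_subset)
    have DL: "((\<lambda>r. (lam + 1) * r) has_real_derivative (lam + 1)) (at x within {s..t})" for x
      by (auto intro!: derivative_eq_intros)
    have D2: "((\<lambda>r. - v r k) has_real_derivative - rhs x k) (at x within {s..t})" if "s \<le> x" "x \<le> t" for x
      using D[OF that] by (rule DERIV_minus)
    have rb1: "rhs x k \<le> lam + 1" if "s \<le> x" for x
    proof -
      have "0 \<le> x" using that st by simp
      from abs_le_D1[OF rhs_bound[OF this]] show ?thesis .
    qed
    have rb2: "- rhs x k \<le> lam + 1" if "s \<le> x" for x
    proof -
      have "0 \<le> x" using that st by simp
      from abs_le_D2[OF rhs_bound[OF this]] show ?thesis .
    qed
    have "v t k - v s k \<le> (lam + 1) * t - (lam + 1) * s"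
      by (rule deriv_mono_le[OF st(2) D DL]) (use rb1 in auto)
    moreover have "- v t k - - v s k \<le> (lam + 1) * t - (lam + 1) * s"
      by (rule deriv_mono_le[OF st(2) D2 DL]) (use rb2 in auto)
    ultimately show ?thesis by (simp add: algebra_simps)
  qed
  assume "0 \<le> x" "0 \<le> y"
  then show ?thesis using main[of x y] main[of y x] by (cases "x \<le> y") (auto simp: abs_if algebra_simps)
qed

end



context sys begin

lemma a_nonneg: "0 \<le> a t j" unfolding a_def by simp
lemma b_nonneg: "0 \<le> b t j" unfolding b_def by simp

lemma a_cont: "continuous_on {0..} (\<lambda>s. a s j)"
  unfolding a_def using v_cont[of j] by (intro continuous_intros) auto

lemma b_cont: "continuous_on {0..} (\<lambda>s. b s j)"
  unfolding b_def h_def g_def using v_cont[of j] by (intro continuous_intros) auto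

lemma h_sign: "t \<ge> 0 \<Longrightarrow> (v t j - vs j) * h t j \<ge> 0"
proof -
  assume t: "t \<ge> 0"
  show ?thesis
  proof (cases "vs j \<le> v t j")
    case True
    have "(1 - v t j) ^ d \<le> (1 - vs j) ^ d" using True v_le1[OF t] by (intro power_mono) auto
    then show ?thesis using True unfolding h_def g_def by simp
  next
    case False
    have "(1 - vs j) ^ d \<le> (1 - v t j) ^ d" using False vs_le1[of j] by (intro power_mono) auto
    then show ?thesis using False unfolding h_def g_def by (simp add: mult_nonpos_nonpos)
  qed
qed

lemma b_upper: "t \<ge> 0 \<Longrightarrow> b t j \<le> real d * a t j"
proof -
  assume t: "t \<ge> 0"
  have "\<bar>(1 - vs j) ^ d - (1 - v t j) ^ d\<bar> \<le> real d * \<bar>(1 - vs j) - (1 - v t j)\<bar>"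
    using vs_nonneg[of j] vs_le1[of j] v_nonneg[OF t] v_le1[OF t]
    by (intro pow_diff_upper) auto
  then show ?thesis unfolding b_def h_def g_def a_def by (simp add: abs_minus_commute)
qed

lemma b_lower: "t \<ge> 0 \<Longrightarrow> (1 - vs j) ^ (d - 1) * a t j \<le> b t j"
proof -
  assume t: "t \<ge> 0"
  have "(1 - vs j) ^ (d - 1) * \<bar>(1 - v t j) - (1 - vs j)\<bar> \<le> \<bar>(1 - v t j) ^ Suc (d - 1) - (1 - vs j) ^ Suc (d - 1)\<bar>"
    using vs_nonneg[of j] vs_le1[of j] v_nonneg[OF t] v_le1[OF t]
    by (intro pow_diff_lower) auto
  moreover have "Suc (d - 1) = d" using d1 by simp
  ultimately show ?thesis unfolding b_def h_def g_def a_def by (simp add: abs_minus_commute)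
qed

definition phi :: "nat \<Rightarrow> real \<Rightarrow> real" where
  "phi i s = lam * a s i - lam * a s (Suc i) - b s (Suc i) + b s (Suc (Suc i))"

lemma phi_cont: "continuous_on {0..} (phi i)"
  unfolding phi_def using a_cont b_cont by (intro continuous_intros) auto

lemma phi_cont': "continuous_on {0..t} (phi i)"
  using phi_cont by (rule continuous_on_subset) auto

lemma abs_step:
  assumes t: "t \<ge> 0"
  shows "a t (Suc i) - a 0 (Suc i) \<le> integral {0..t} (phi i)"
proof (rule field_le_epsilon)
  fix \<delta> :: real assume \<delta>: "0 < \<delta>"
  define K where "K = (lam + real d) * t + 1"
  have K0: "0 < K" unfolding K_def using t lam0 by (simp add: add_nonneg_pos)
  define \<epsilon> where "\<epsilon> = \<delta> / K"
  have e0: "0 < \<epsilon>" unfolding \<epsilon>_def using \<delta> K0 by simp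
  define e where "e s = v s (Suc i) - vs (Suc i)" for s
  define F where "F s = sqrt ((e s)\<^sup>2 + \<epsilon>\<^sup>2)" for s
  define G where "G s = integral {0..s} (phi i) + (lam + real d) * \<epsilon> * s" for s
  have Sp: "0 < (e x)\<^sup>2 + \<epsilon>\<^sup>2" for x using e0 by (simp add: add_nonneg_pos)
  have DF: "(F has_real_derivative (e x * rhs x (Suc i) / sqrt ((e x)\<^sup>2 + \<epsilon>\<^sup>2))) (at x within {0..t})"
    if x: "0 \<le> x" "x \<le> t" for x
  proof -
    have dv: "((\<lambda>s. v s (Suc i)) has_real_derivative rhs x (Suc i)) (at x within {0..t})"
      using derv[of x "Suc i"] x by (auto intro: DERIV_subset)
    have dsq: "((\<lambda>s. (e s)\<^sup>2 + \<epsilon>\<^sup>2) has_real_derivative (2 * e x * rhs x (Suc i))) (at x within {0..t})"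
      unfolding e_def by (auto intro!: derivative_eq_intros dv)
    have "(F has_real_derivative (inverse (sqrt ((e x)\<^sup>2 + \<epsilon>\<^sup>2)) / 2) * (2 * e x * rhs x (Suc i)))
        (at x within {0..t})"
      unfolding F_def by (rule DERIV_chain2[OF _ dsq, OF DERIV_real_sqrt[OF Sp[of x]]])
    moreover have "(inverse (sqrt ((e x)\<^sup>2 + \<epsilon>\<^sup>2)) / 2) * (2 * e x * rhs x (Suc i))
        = e x * rhs x (Suc i) / sqrt ((e x)\<^sup>2 + \<epsilon>\<^sup>2)"
      by (simp add: field_simps)
    ultimately show ?thesis by simp
  qed
  have DG: "(G has_real_derivative (phi i x + (lam + real d) * \<epsilon>)) (at x within {0..t})"
    if x: "0 \<le> x" "x \<le> t" for x
  proof -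
    have "((\<lambda>z. integral {0..z} (phi i)) has_real_derivative phi i x) (at x within {0..t})"
      using integral_has_real_derivative[OF phi_cont'[of t], of x] x by auto
    then show ?thesis unfolding G_def by (auto intro!: derivative_eq_intros)
  qed
  have le: "e x * rhs x (Suc i) / sqrt ((e x)\<^sup>2 + \<epsilon>\<^sup>2) \<le> phi i x + (lam + real d) * \<epsilon>"
    if x: "0 \<le> x" "x \<le> t" for x
  proof -
    have "e x * (lam * ((v x i - vs i) - e x) + h x (Suc (Suc i)) - h x (Suc i)) / sqrt ((e x)\<^sup>2 + \<epsilon>\<^sup>2)
       \<le> lam * \<bar>v x i - vs i\<bar> - lam * \<bar>e x\<bar> - \<bar>h x (Suc i)\<bar> + \<bar>h x (Suc (Suc i))\<bar> + (lam + real d) * \<epsilon>"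
      using e0 lam0 h_sign[of x "Suc i"] b_upper[of x "Suc i"] x
      by (intro key_ineq) (auto simp: e_def b_def a_def)
    then show ?thesis using rhs_eq[of x i] x
      by (simp add: phi_def a_def b_def e_def)
  qed
  have "F t - F 0 \<le> G t - G 0"
    by (rule deriv_mono_le[OF t DF DG le])
  moreover have "G 0 = 0" unfolding G_def by simp
  moreover have "G t = integral {0..t} (phi i) + \<epsilon> * (K - 1)" unfolding G_def K_def by (simp add: algebra_simps)
  moreover have "a t (Suc i) \<le> F t"
  proof -
    have "sqrt ((e t)\<^sup>2) \<le> F t" unfolding F_def by (rule real_sqrt_le_mono) simp
    then show ?thesis by (simp add: a_def e_def)
  qed
  moreover have "F 0 \<le> a 0 (Suc i) + \<epsilon>"
  proof -
    have "(e 0)\<^sup>2 + \<epsilon>\<^sup>2 \<le> (\<bar>e 0\<bar> + \<epsilon>)\<^sup>2" using e0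
      by (simp add: power2_eq_square algebra_simps)
    then have "F 0 \<le> sqrt ((\<bar>e 0\<bar> + \<epsilon>)\<^sup>2)" unfolding F_def by (rule real_sqrt_le_mono)
    also have "\<dots> = \<bar>e 0\<bar> + \<epsilon>" using e0 by simp
    finally show ?thesis by (simp add: a_def e_def)
  qed
  moreover have "\<epsilon> * K = \<delta>" unfolding \<epsilon>_def using K0 by simp
  ultimately show "a t (Suc i) - a 0 (Suc i) \<le> integral {0..t} (phi i) + \<delta>"
    by (simp add: algebra_simps)
qed

end



context sys begin

lemma csub: "continuous_on {0..} (f :: real \<Rightarrow> real) \<Longrightarrow> continuous_on {0..t} f"
  by (rule continuous_on_subset) auto

lemma intg: "continuous_on {0..} (f :: real \<Rightarrow> real) \<Longrightarrow> f integrable_on {0..t}"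
  by (intro integrable_continuous_interval csub)

definition M0 :: real where "M0 = suminf (\<lambda>k. v 0 (Suc k))"

lemma tele: "t \<ge> 0 \<Longrightarrow> (\<Sum>k<N. rhs t (Suc k)) = lam * (1 - v t N) + (1 - v t 1) ^ d - (1 - v t (Suc N)) ^ d"
proof (induction N)
  case 0 then show ?case using v0[of t] by simp
next
  case (Suc N)
  then show ?case by (simp add: rhs_def algebra_simps)
qed

lemma mass_bound: "t \<ge> 0 \<Longrightarrow> (\<Sum>k<N. v t (Suc k)) \<le> M0 + (lam + 1) * t"
proof -
  assume t: "t \<ge> 0"
  have D: "((\<lambda>s. \<Sum>k<N. v s (Suc k)) has_real_derivative (\<Sum>k<N. rhs x (Suc k))) (at x within {0..t})"
    if "0 \<le> x" "x \<le> t" for x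
    by (intro DERIV_sum DERIV_subset[OF derv]) (use that in auto)
  have DL: "((\<lambda>r. (lam + 1) * r) has_real_derivative (lam + 1)) (at x within {0..t})" for x
    by (auto intro!: derivative_eq_intros)
  have le: "(\<Sum>k<N. rhs x (Suc k)) \<le> lam + 1" if "0 \<le> x" "x \<le> t" for x
  proof -
    have "lam * (1 - v x N) \<le> lam" using lam0 v_nonneg[of x N] that by simp
    moreover have "(1 - v x 1) ^ d \<le> 1" using g_bounds[of "v x 1"] v_nonneg[of x 1] v_le1[of x 1] that
      by (simp add: g_def)
    moreover have "0 \<le> (1 - v x (Suc N)) ^ d" using v_le1[of x "Suc N"] that by simp
    ultimately show ?thesis using tele[of x N] that by linarith
  qed
  have "(\<Sum>k<N. v t (Suc k)) - (\<Sum>k<N. v 0 (Suc k)) \<le> (lam + 1) * t - (lam + 1) * 0"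
    by (rule deriv_mono_le[OF t D DL le]) auto
  moreover have "(\<Sum>k<N. v 0 (Suc k)) \<le> M0"
    unfolding M0_def using init v_nonneg[of 0] unfolding seqUo_def
    by (intro sum_le_suminf) auto
  ultimately show ?thesis by simp
qed

lemma v_tail: "t \<ge> 0 \<Longrightarrow> v t (Suc n) \<le> (M0 + (lam + 1) * t) * inverse (real (Suc n))"
proof -
  assume t: "t \<ge> 0"
  have "(\<Sum>k<Suc n. v t (Suc n)) \<le> (\<Sum>k<Suc n. v t (Suc k))"
    using t by (intro sum_mono v_mono) auto
  then have "real (Suc n) * v t (Suc n) \<le> M0 + (lam + 1) * t" using mass_bound[OF t, of "Suc n"] by simp
  then show ?thesis by (simp add: field_simps)
qed

definition C0 :: real where "C0 = M0 + 1 / (1 - lam)"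

lemma tsum:
  assumes t: "t \<ge> 0"
  shows "(\<Sum>m\<le>n. a t (Suc i + m)) - (\<Sum>m\<le>n. a 0 (Suc i + m)) \<le>
    integral {0..t} (\<lambda>s. lam * a s i - lam * a s (Suc i + n) - b s (Suc i) + b s (Suc (Suc i + n)))"
proof (induction n)
  case 0
  have "phi i = (\<lambda>s. lam * a s i - lam * a s (Suc i + 0) - b s (Suc i) + b s (Suc (Suc i + 0)))"
    by (rule ext) (simp add: phi_def)
  then show ?case using abs_step[OF t, of i] by simp
next
  case (Suc n)
  have ph: "phi (Suc (i + n)) = (\<lambda>s. lam * a s (Suc i + n) - lam * a s (Suc i + Suc n) - b s (Suc i + Suc n) + b s (Suc (Suc i + Suc n)))"
    by (rule ext) (simp add: phi_def)
  have st: "a t (Suc i + Suc n) - a 0 (Suc i + Suc n) \<le> integral {0..t} (phi (Suc (i + n)))"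
    using abs_step[OF t, of "Suc (i + n)"] by simp
  define f1 where "f1 = (\<lambda>s. lam * a s i - lam * a s (Suc i + n) - b s (Suc i) + b s (Suc (Suc i + n)))"
  have c1: "continuous_on {0..} f1" unfolding f1_def using a_cont b_cont by (intro continuous_intros) auto
  have c2: "continuous_on {0..} (phi (Suc (i + n)))" by (rule phi_cont)
  have "integral {0..t} f1 + integral {0..t} (phi (Suc (i + n))) = integral {0..t} (\<lambda>s. f1 s + phi (Suc (i + n)) s)"
    by (rule integral_add[symmetric]) (auto intro: intg c1 c2)
  also have "(\<lambda>s. f1 s + phi (Suc (i + n)) s) = (\<lambda>s. lam * a s i - lam * a s (Suc i + Suc n) - b s (Suc i) + b s (Suc (Suc i + Suc n)))"
    unfolding f1_def ph by (rule ext) simp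
  finally have eq: "integral {0..t} f1 + integral {0..t} (phi (Suc (i + n))) = integral {0..t} (\<lambda>s. lam * a s i - lam * a s (Suc i + Suc n) - b s (Suc i) + b s (Suc (Suc i + Suc n)))" .
  show ?case using Suc.IH st eq unfolding f1_def by (simp add: algebra_simps)
qed

lemma int_const_le:
  assumes t: "t \<ge> 0" and c: "continuous_on {0..} (f :: real \<Rightarrow> real)" and le: "\<And>s. 0 \<le> s \<Longrightarrow> s \<le> t \<Longrightarrow> f s \<le> K"
  shows "integral {0..t} f \<le> t * K"
proof -
  have "integral {0..t} f \<le> integral {0..t} (\<lambda>s. K)"
    by (rule integral_le) (use intg[OF c] le in auto)
  also have "\<dots> = t * K" using t by simp
  finally show ?thesis .
qed

lemma b_bound:
  assumes t: "t \<ge> 0"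
  shows "integral {0..t} (\<lambda>s. b s (Suc i)) \<le> C0 + lam * integral {0..t} (\<lambda>s. a s i)"
proof -
  define K where "K = M0 + (lam + 1) * t"
  define z where "z n = t * (real d * (K * inverse (real (Suc n)) + lam ^ n))" for n
  have main: "integral {0..t} (\<lambda>s. b s (Suc i)) \<le> C0 + lam * integral {0..t} (\<lambda>s. a s i) + z n" for n
  proof -
    have T: "(\<Sum>m\<le>n. a t (Suc i + m)) - (\<Sum>m\<le>n. a 0 (Suc i + m)) \<le>
      integral {0..t} (\<lambda>s. lam * a s i - lam * a s (Suc i + n) - b s (Suc i) + b s (Suc (Suc i + n)))"
      by (rule tsum[OF t])
    have S1: "0 \<le> (\<Sum>m\<le>n. a t (Suc i + m))" by (intro sum_nonneg a_nonneg)
    have S2: "(\<Sum>m\<le>n. a 0 (Suc i + m)) \<le> C0"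
    proof -
      have "(\<Sum>m\<le>n. a 0 (Suc i + m)) \<le> (\<Sum>m\<le>n. v 0 (Suc m) + lam ^ m)"
      proof (rule sum_mono)
        fix m assume "m \<in> {..n}"
        have "a 0 (Suc i + m) \<le> v 0 (Suc i + m) + vs (Suc i + m)"
          unfolding a_def using v_nonneg[of 0] vs_nonneg by (simp add: abs_le_iff)
        moreover have "v 0 (Suc i + m) \<le> v 0 (Suc m)" by (intro v_mono) auto
        moreover have "vs (Suc i + m) \<le> lam ^ m"
          using vs_pow[of "Suc i + m"] power_decreasing[of m "Suc i + m" lam] lam0 lam1 by simp
        ultimately show "a 0 (Suc i + m) \<le> v 0 (Suc m) + lam ^ m" by simp
      qed
      also have "\<dots> = (\<Sum>m<Suc n. v 0 (Suc m)) + (\<Sum>m<Suc n. lam ^ m)"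
        by (simp add: sum.distrib lessThan_Suc_atMost)
      also have "(\<Sum>m<Suc n. v 0 (Suc m)) \<le> M0"
        unfolding M0_def using init v_nonneg[of 0] unfolding seqUo_def
        by (intro sum_le_suminf) auto
      also have "(\<Sum>m<Suc n. lam ^ m) \<le> (\<Sum>m. lam ^ m)"
        using lam0 lam1 by (intro sum_le_suminf summable_geometric) auto
      also have "(\<Sum>m. lam ^ m) = 1 / (1 - lam)"
        using lam0 lam1 by (intro suminf_geometric) auto
      finally show ?thesis unfolding C0_def by simp
    qed
    have ca: "continuous_on {0..} (\<lambda>s. a s j)" for j by (rule a_cont)
    have cb: "continuous_on {0..} (\<lambda>s. b s j)" for j by (rule b_cont)
    have I1: "integral {0..t} (\<lambda>s. lam * a s i - lam * a s (Suc i + n) - b s (Suc i) + b s (Suc (Suc i + n)))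
      \<le> integral {0..t} (\<lambda>s. lam * a s i - b s (Suc i) + b s (Suc (Suc i + n)))"
      by (rule integral_le) (auto intro!: intg continuous_intros ca cb simp: a_nonneg lam0 less_imp_le)
    have I2: "integral {0..t} (\<lambda>s. lam * a s i - b s (Suc i) + b s (Suc (Suc i + n)))
      = lam * integral {0..t} (\<lambda>s. a s i) - integral {0..t} (\<lambda>s. b s (Suc i)) + integral {0..t} (\<lambda>s. b s (Suc (Suc i + n)))"
    proof -
      have "integral {0..t} (\<lambda>s. lam * a s i - b s (Suc i) + b s (Suc (Suc i + n)))
        = integral {0..t} (\<lambda>s. lam * a s i - b s (Suc i)) + integral {0..t} (\<lambda>s. b s (Suc (Suc i + n)))"
        by (rule integral_add) (auto intro!: intg continuous_intros ca cb)
      also have "integral {0..t} (\<lambda>s. lam * a s i - b s (Suc i))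
        = integral {0..t} (\<lambda>s. lam * a s i) - integral {0..t} (\<lambda>s. b s (Suc i))"
        by (rule integral_diff) (auto intro!: intg continuous_intros ca cb)
      also have "integral {0..t} (\<lambda>s. lam * a s i) = lam * integral {0..t} (\<lambda>s. a s i)"
        by (rule Henstock_Kurzweil_Integration.integral_mult_right)
      finally show ?thesis .
    qed
    have I3: "integral {0..t} (\<lambda>s. b s (Suc (Suc i + n))) \<le> z n"
      unfolding z_def
    proof (rule int_const_le[OF t cb])
      fix s assume s: "0 \<le> s" "s \<le> t"
      have "b s (Suc (Suc i + n)) \<le> real d * a s (Suc (Suc i + n))" by (rule b_upper) (use s in auto)
      also have "a s (Suc (Suc i + n)) \<le> v s (Suc (Suc i + n)) + vs (Suc (Suc i + n))"
        unfolding a_def using v_nonneg[of s] vs_nonneg s by (simp add: abs_le_iff)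
      also have "v s (Suc (Suc i + n)) \<le> v s (Suc n)" using s by (intro v_mono) auto
      also have "v s (Suc n) \<le> (M0 + (lam + 1) * s) * inverse (real (Suc n))" by (rule v_tail) (use s in auto)
      also have "\<dots> \<le> K * inverse (real (Suc n))" unfolding K_def using s lam0
        by (intro mult_right_mono) auto
      also have "vs (Suc (Suc i + n)) \<le> lam ^ n"
        using vs_pow[of "Suc (Suc i + n)"] power_decreasing[of n "Suc (Suc i + n)" lam] lam0 lam1 by simp
      finally show "b s (Suc (Suc i + n)) \<le> real d * (K * inverse (real (Suc n)) + lam ^ n)"
        by (simp add: mult_left_mono)
    qed
    show ?thesis using T S1 S2 I1 I2 I3 by linarith
  qed
  have lim: "(\<lambda>n. C0 + lam * integral {0..t} (\<lambda>s. a s i) + z n) \<longlonglongrightarrow>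
      C0 + lam * integral {0..t} (\<lambda>s. a s i) + t * (real d * (K * 0 + 0))"
    unfolding z_def using lam0 lam1
    by (intro tendsto_intros LIMSEQ_inverse_real_of_nat) auto
  then have lim': "(\<lambda>n. C0 + lam * integral {0..t} (\<lambda>s. a s i) + z n) \<longlonglongrightarrow>
      C0 + lam * integral {0..t} (\<lambda>s. a s i)" by simp
  show ?thesis
    by (rule LIMSEQ_le_const[OF lim']) (use main in auto)
qed

end



context sys begin

lemma a_int_bound: "\<exists>B. \<forall>t\<ge>0. integral {0..t} (\<lambda>s. a s i) \<le> B"
proof (induction i)
  case 0
  have "integral {0..t} (\<lambda>s. a s 0) \<le> 0" if "t \<ge> 0" for t
  proof -
    have "integral {0..t} (\<lambda>s. a s 0) \<le> integral {0..t} (\<lambda>s. 0::real)"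
    proof (rule integral_le)
      show "(\<lambda>s. a s 0) integrable_on {0..t}" by (rule intg[OF a_cont])
      show "(\<lambda>s. 0::real) integrable_on {0..t}" by (rule integrable_0)
      fix x assume "x \<in> {0..t}"
      then show "a x 0 \<le> 0" by (simp add: a_def v0 vs0)
    qed
    then show ?thesis by simp
  qed
  then show ?case by blast
next
  case (Suc i)
  then obtain B where B: "\<And>t. t \<ge> 0 \<Longrightarrow> integral {0..t} (\<lambda>s. a s i) \<le> B" by blast
  define c where "c = (1 - vs (Suc i)) ^ (d - 1)"
  have bl: "\<And>x. 0 \<le> x \<Longrightarrow> c * a x (Suc i) \<le> b x (Suc i)" unfolding c_def using b_lower by blast
  have c0: "0 < c" unfolding c_def using vs_lt1[of i] by simp
  have "integral {0..t} (\<lambda>s. a s (Suc i)) \<le> (C0 + lam * B) / c" if t: "t \<ge> 0" for t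
  proof -
    have "c * integral {0..t} (\<lambda>s. a s (Suc i)) = integral {0..t} (\<lambda>s. c * a s (Suc i))" by simp
    also have "\<dots> \<le> integral {0..t} (\<lambda>s. b s (Suc i))"
      by (rule integral_le) (auto intro!: intg a_cont b_cont continuous_intros bl)
    also have "\<dots> \<le> C0 + lam * integral {0..t} (\<lambda>s. a s i)" by (rule b_bound[OF t])
    also have "\<dots> \<le> C0 + lam * B" using B[OF t] lam0 by simp
    finally show ?thesis using c0 by (simp add: field_simps)
  qed
  then show ?case by blast
qed

lemma conv: "k \<ge> 1 \<Longrightarrow> ((\<lambda>t. v t k) \<longlongrightarrow> vs k) at_top"
proof -
  assume "k \<ge> 1"
  obtain B where B: "\<And>t. t \<ge> 0 \<Longrightarrow> integral {0..t} (\<lambda>s. a s k) \<le> B" using a_int_bound by blast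
  have "((\<lambda>s. a s k) \<longlongrightarrow> 0) at_top"
  proof (rule int_to_zero[of "lam + 1" _ B])
    show "0 < lam + 1" using lam0 by simp
    show "continuous_on {0..} (\<lambda>s. a s k)" by (rule a_cont)
    fix x y :: real assume "0 \<le> x" "0 \<le> y"
    then have "\<bar>v x k - v y k\<bar> \<le> (lam + 1) * \<bar>x - y\<bar>" by (rule v_lip)
    then show "\<bar>a x k - a y k\<bar> \<le> (lam + 1) * \<bar>x - y\<bar>" unfolding a_def by linarith
  qed (auto simp: a_nonneg B)
  then have "((\<lambda>s. v s k - vs k) \<longlongrightarrow> 0) at_top"
    unfolding a_def by (simp add: tendsto_rabs_zero_iff)
  then show ?thesis by (simp add: Lim_null[symmetric])
qed

end

theorem lemma3p1:
  fixes d :: nat and lam :: real and v :: "real \<Rightarrow> nat \<Rightarrow> real"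
  assumes "d \<ge> 1" and "0 < lam" and "lam < 1"
    and "\<And>t. t \<ge> 0 \<Longrightarrow> v t 0 = 1"
    and "\<And>t. t \<ge> 0 \<Longrightarrow> v t \<in> seqU"
    and "\<And>t k. t \<ge> 0 \<Longrightarrow> k \<ge> 1 \<Longrightarrow>
           ((\<lambda>s. v s k) has_real_derivative
              (lam * (v t (k - 1) - v t k) - (1 - v t (k + 1)) ^ d + (1 - v t k) ^ d))
           (at t within {0..})"
    and "v 0 \<in> seqUo"
  shows "\<forall>k\<ge>1. ((\<lambda>t. v t k) \<longlongrightarrow> vstar d lam k) at_top"
proof -
  interpret S: sys d lam v by (rule sys.intro) (use assms in auto)
  show ?thesis using S.conv unfolding S.vs_def by blast
qed

end
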